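(* Let $m$ be a positive integer and $a,b\in\mathbb{F}_{2^{3m}}^*$. Put $A=a^{2^{2m}+2^m+1}+1$ and $B=a^{2^{2m}}b^{2^m}+a^{2^{2m}+2^m}b+b^{2^{2m}}$. Then the equation $x^{2^m}+ax+b=0$ (in $x\in\mathbb{F}_{2^{3m}}$): (i) has at most one solution, namely possibly $x=B/A$, when $A\neq 0$; (ii) has exactly $2^m$ solutions when $A=0$ and $B=0$; (iii) has no solutions when $A=0$ and $B\neq 0$. *)

theory Defs
  imports Main
begin

end

theory Submission imports Defs "HOL-Computational_Algebra.Polynomial" begin

lemma char_card: "of_nat (card (UNIV::'a::{comm_ring_1,finite} set)) = (0::'a)"
proof -
  have "(\<Sum>y\<in>UNIV. 1 + y) = (\<Sum>y\<in>(UNIV::'a set). y)"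
    by (rule sum.reindex_bij_witness[of _ "\<lambda>y. y - 1" "\<lambda>y. 1 + y"]) auto
  then show ?thesis by (simp add: sum.distrib)
qed

lemma fermat: fixes x :: "'a::{field,finite}" shows "x ^ card (UNIV::'a set) = x"
proof (cases "x = 0")
  case True
  have "card (UNIV::'a set) > 0" by (simp add: finite_UNIV_card_ge_0)
  then show ?thesis using True by simp
next
  case False
  define S where "S = (UNIV::'a set) - {0}"
  have "(\<Prod>y\<in>S. x*y) = (\<Prod>y\<in>S. y)"
    by (rule prod.reindex_bij_witness[of _ "\<lambda>y. y / x" "\<lambda>y. x * y"]) (use False in \<open>auto simp: S_def\<close>)
  then have "x ^ card S * (\<Prod>y\<in>S. y) = 1 * (\<Prod>y\<in>S. y)" by (simp add: prod.distrib)
  moreover have "(\<Prod>y\<in>S. y) \<noteq> 0" by (simp add: S_def)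
  ultimately have "x ^ card S = 1" by (metis mult_cancel_right)
  moreover have "card (UNIV::'a set) = Suc (card S)"
    unfolding S_def by (simp add: card_Diff_singleton) (metis Suc_pred finite_UNIV_card_ge_0 finite)
  ultimately show ?thesis by simp
qed

lemma frob: fixes x y :: "'a::comm_ring_1" assumes "(2::'a) = 0"
  shows "(x+y)^(2^k) = x^(2^k)+y^(2^k)"
proof (induction k)
  case 0 then show ?case by simp
next
  case (Suc k)
  have "(x+y)^(2^Suc k) = ((x+y)^(2^k))^2" by (simp add: power_mult[symmetric] mult.commute)
  also have "\<dots> = (x^(2^k)+y^(2^k))^2" using Suc by simp
  also have "\<dots> = (x^(2^k))^2 + (y^(2^k))^2" by (simp add: power2_sum assms)
  also have "\<dots> = x^(2^Suc k)+y^(2^Suc k)" by (simp add: power_mult[symmetric] mult.commute)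
  finally show ?case .
qed

lemma roots_bound: fixes c d :: "'a::field" assumes "k < n" "j < n"
  shows "card {x. x^n + c*x^k + d*x^j = 0} \<le> n"
proof -
  define p where "p = monom 1 n + monom c k + monom d j"
  have ev: "poly p x = x^n + c*x^k + d*x^j" for x by (simp add: p_def poly_monom)
  have "coeff p n = 1" using assms by (simp add: p_def)
  then have "p \<noteq> 0" by auto
  have "degree p \<le> n" using assms by (intro degree_le) (auto simp: p_def)
  with card_poly_roots_bound[OF \<open>p \<noteq> 0\<close>] show ?thesis by (simp add: ev)
qed

theorem lemma6:
  fixes a b :: "'a :: {field, finite}" and m :: nat
  assumes "m > 0"
    and "card (UNIV :: 'a set) = 2 ^ (3 * m)"
    and "a \<noteq> 0" and "b \<noteq> 0"
  defines "A \<equiv> a ^ (2 ^ (2 * m) + 2 ^ m + 1) + 1"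
    and "B \<equiv> a ^ (2 ^ (2 * m)) * b ^ (2 ^ m) + a ^ (2 ^ (2 * m) + 2 ^ m) * b + b ^ (2 ^ (2 * m))"
  shows "(A \<noteq> 0 \<longrightarrow> {x. x ^ (2 ^ m) + a * x + b = 0} \<subseteq> {B / A})
    \<and> (A = 0 \<and> B = 0 \<longrightarrow> card {x. x ^ (2 ^ m) + a * x + b = 0} = 2 ^ m)
    \<and> (A = 0 \<and> B \<noteq> 0 \<longrightarrow> {x. x ^ (2 ^ m) + a * x + b = 0} = {})"
proof -
  define q :: nat where "q = 2 ^ m"
  have q2: "2 ^ (2*m) = q*q" unfolding q_def by (simp add: mult_2 power_add)
  have m3: "3*m = m+m+m" by simp
  have q3: "2 ^ (3*m) = q*q*q" unfolding q_def m3 power_add by simp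
  have q1: "1 < q" unfolding q_def using assms(1) one_less_power[of "2::nat" m] by simp
  have "of_nat (2 ^ (3*m)) = (0::'a)" using char_card[where 'a='a] assms(2) by simp
  then have "(2::'a) ^ (3*m) = 0" by simp
  then have two: "(2::'a) = 0" by simp
  have uu: "u + u = 0" for u :: 'a by (metis mult_2 two mult_zero_left)
  have neg: "u - v = u + v" for u v :: 'a by (metis add_diff_cancel_right' diff_add_cancel uu add.assoc add_0_right)
  have fq: "(u + v) ^ q = u ^ q + v ^ q" for u v :: 'a unfolding q_def by (rule frob[OF two])
  have fer: "x ^ (q*q*q) = x" for x :: 'a using fermat[of x] assms(2) q3 by simp
  define L where "L x = x ^ q + a * x" for x
  define Bf where "Bf y = a ^ (q*q) * y ^ q + a ^ (q*q + q) * y + y ^ (q*q)" for y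
  have AB: "A = a ^ (q*q + q + 1) + 1" "B = Bf b" unfolding A_def B_def Bf_def q2 q_def by simp_all
  have key: "A * x = Bf (L x)" for x
  proof -
    define y where "y = L x"
    have h1: "x ^ q = a * x + y" unfolding y_def L_def by (simp add: add.commute add.left_commute uu two)
    have h2: "x ^ (q*q) = a^q * (a*x+y) + y^q"
      by (simp add: power_mult fq power_mult_distrib h1)
    have h3: "x ^ (q*q*q) = a^(q*q) * (a^q * (a*x+y) + y^q) + y^(q*q)"
    proof -
      have "x ^ (q*q*q) = (a^q * x^q + y^q)^q" by (simp add: power_mult h1 fq power_mult_distrib)
      also have "\<dots> = a^(q*q) * x^(q*q) + y^(q*q)" by (simp add: fq power_mult_distrib power_mult)
      finally show ?thesis by (simp add: h2)
    qed
    have "x = a^(q*q+q+1) * x + Bf y" using h3 fer[of x] unfolding Bf_def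
      by (simp add: algebra_simps power_add)
    then have "A * x = a^(q*q+q+1) * x + (a^(q*q+q+1) * x + Bf y)" unfolding AB by (simp add: algebra_simps)
    also have "\<dots> = Bf y" by (metis add.assoc uu add_0_left)
    finally show ?thesis by (simp add: y_def)
  qed
  have Ladd: "L (u + v) = L u + L v" for u v by (simp add: L_def fq algebra_simps)
  have solset: "{x. x ^ (2 ^ m) + a * x + b = 0} = {x. L x = b}"
  proof -
    have "x ^ q + a * x + b = 0 \<longleftrightarrow> L x = b" for x
      unfolding L_def by (metis add_diff_cancel_right' neg diff_self add_0_left uu eq_iff_diff_eq_0)
    then show ?thesis by (simp add: q_def)
  qed
  have part1: "A \<noteq> 0 \<longrightarrow> {x. L x = b} \<subseteq> {B / A}"
  proof (intro impI subsetI)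
    fix x assume "A \<noteq> 0" "x \<in> {x. L x = b}"
    then have "A * x = B" using key AB by auto
    then show "x \<in> {B / A}" using \<open>A \<noteq> 0\<close> by (auto simp: field_simps)
  qed
  have part3: "A = 0 \<and> B \<noteq> 0 \<longrightarrow> {x. L x = b} = {}"
    using key AB by auto
  have part2: "A = 0 \<and> B = 0 \<longrightarrow> card {x. L x = b} = q"
  proof
    assume AB0: "A = 0 \<and> B = 0"
    define K where "K = {x. L x = 0}"
    define I where "I = range L"
    define R where "R = {y. Bf y = 0}"
    have fib: "{x. L x = L c} = (\<lambda>k. c + k) ` K" for c
    proof (intro set_eqI iffI)
      fix x assume "x \<in> {x. L x = L c}"
      then have "L (x + c) = 0" by (simp add: Ladd uu)
      moreover have "x = c + (x + c)" by (metis add.commute add.left_commute uu add_0_right)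
      ultimately show "x \<in> (\<lambda>k. c + k) ` K" unfolding K_def by blast
    next
      fix x assume "x \<in> (\<lambda>k. c + k) ` K"
      then show "x \<in> {x. L x = L c}" unfolding K_def by (auto simp: Ladd)
    qed
    have cfib: "card {x. L x = L c} = card K" for c
      unfolding fib by (rule card_image) (simp add: inj_on_def)
    have Kb: "card K \<le> q"
    proof -
      have "K = {x. x^q + a*x^1 + 0*x^0 = 0}" unfolding K_def L_def by simp
      then show ?thesis using roots_bound[of 1 q 0 a 0] q1 by simp
    qed
    have IR: "I \<subseteq> R" unfolding I_def R_def using key AB0 by auto
    have Rb: "card R \<le> q*q"
    proof -
      have "R = {y. y^(q*q) + a^(q*q)*y^q + a^(q*q+q)*y^1 = 0}" unfolding R_def Bf_def
        by (simp add: algebra_simps)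
      moreover have qq: "q < q*q" using q1 by simp
      moreover have "1 < q*q" using q1 qq by linarith
      ultimately show ?thesis using roots_bound[of q "q*q" 1 "a^(q*q)" "a^(q*q+q)"] by simp
    qed
    have "UNIV = (\<Union>y\<in>I. {x. L x = y})" unfolding I_def by auto
    moreover have "card (\<Union>y\<in>I. {x. L x = y}) = (\<Sum>y\<in>I. card {x. L x = y})"
      by (rule card_UN_disjoint) auto
    ultimately have "card (UNIV::'a set) = (\<Sum>y\<in>I. card {x. L x = y})" by simp
    also have "\<dots> = (\<Sum>y\<in>I. card K)" unfolding I_def
      by (rule sum.cong) (auto simp: cfib)
    finally have prod: "q*q*q = card I * card K" using assms(2) q3 by simp
    have IRc: "card I \<le> q*q" using IR Rb card_mono[of R I] by simp
    have "q*q*q \<le> q*q * card K" using prod IRc by (simp add: mult_le_cancel_right)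
    then have "q \<le> card K" using q1 by (metis mult.commute mult_le_cancel1 mult_pos_pos zero_less_one less_trans not_le)
    with Kb have Kq: "card K = q" by simp
    then have "card I = q*q" using prod q1 by simp
    then have "I = R" using IR Rb card_mono[of R I] by (intro card_subset_eq) auto
    then have "b \<in> I" using AB0 AB unfolding R_def by simp
    then obtain c where "b = L c" unfolding I_def by auto
    then show "card {x. L x = b} = q" using cfib Kq by simp
  qed
  show ?thesis using part1 part2 part3 solset q_def by simp
qed

end
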